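(* Let $G_n$, $m$ and $T$ be as in the context. A minimal walk in $G_n$ (starting at $m$) is an Eulerian cycle of $G_n$ if and only if $T$ is a tree, i.e. $T$ contains no directed cycle (equivalently, $T$ is a spanning tree of $G_n$ in which every vertex has a directed path to $m$).
   Context: Let $A$ be a finite alphabet with a linear order $<$, extended to the lexicographic order on words: $x<y$ if $x$ is a proper prefix of $y$, or $x=uav$, $y=ubw$ with $a,b\in A$, $a<b$. Let $\mathcal{F}$ be a set of words over $A$ (forbidden words). A word $w$ is in the language if the bi-infinite periodic sequence $\cdots www\cdots$ contains no element of $\mathcal{F}$ as a factor; $W_k$ denotes the set of words of length $k$ in the language. Fix $n\geq 1$ and consider the digraph with vertex set $A^n$ and arcs $(as,sb)$ for $a,b\in A$, $s\in A^{n-1}$, $asb\in W_{n+1}$, the label of $(as,sb)$ being $b$. The de Bruijn graph of span $n$, $G_n$, is a strongly connected component of maximum size of this digraph; vertices are identified with their words. Let $m$ be the vertex of $G_n$ whose word is lexicographically largest. For each vertex $v$, let $e(v)$ be the arc of $G_n$ with tail $v$ having maximum label. $T$ is the spanning subgraph of $G_n$ with arc set $\{e(v): v\in V(G_n), v\neq m\}$. A minimal walk is the walk constructed as follows: start at $m$; at the current vertex, follow the arc of smallest label among the not-yet-used arcs with tail at this vertex; stop when no unused arc leaves the current vertex. An Eulerian cycle is a closed walk using every arc of $G_n$ exactly once. *)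

theory Defs
  imports Main
begin

text \<open>An arc (as, sb) of the de Bruijn graph is identified with the word asb of length n+1:
  its tail is butlast, its head is tl, its label is last.\<close>

text \<open>u is a factor of the bi-infinite periodic sequence ... w w w ...\<close>
definition periodic_factor :: "'a list \<Rightarrow> 'a list \<Rightarrow> bool" where
  "periodic_factor u w \<longleftrightarrow>
     (\<exists>i. \<forall>j < length u. u ! j = w ! ((i + j) mod length w))"

definition in_lang :: "'a list set \<Rightarrow> 'a list \<Rightarrow> bool" where
  "in_lang F w \<longleftrightarrow> w \<noteq> [] \<and> \<not> (\<exists>u\<in>F. periodic_factor u w)"

definition W :: "'a list set \<Rightarrow> nat \<Rightarrow> 'a list set" where
  "W F k = {w. length w = k \<and> in_lang F w}"

definition dB_rel :: "'a list set \<Rightarrow> nat \<Rightarrow> ('a list \<times> 'a list) set" where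
  "dB_rel F n = {(butlast x, tl x) | x. x \<in> W F (Suc n)}"

definition is_scc :: "'a list set \<Rightarrow> nat \<Rightarrow> 'a list set \<Rightarrow> bool" where
  "is_scc F n C \<longleftrightarrow> C \<noteq> {} \<and> C \<subseteq> {v. length v = n} \<and>
     (\<forall>u\<in>C. \<forall>v. length v = n \<longrightarrow>
        (v \<in> C \<longleftrightarrow> (u, v) \<in> (dB_rel F n)\<^sup>* \<and> (v, u) \<in> (dB_rel F n)\<^sup>*))"

definition is_max_scc :: "'a list set \<Rightarrow> nat \<Rightarrow> 'a list set \<Rightarrow> bool" where
  "is_max_scc F n C \<longleftrightarrow> is_scc F n C \<and> (\<forall>C'. is_scc F n C' \<longrightarrow> card C' \<le> card C)"

definition G_arcs :: "'a list set \<Rightarrow> nat \<Rightarrow> 'a list set \<Rightarrow> 'a list set" where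
  "G_arcs F n C = {x \<in> W F (Suc n). butlast x \<in> C \<and> tl x \<in> C}"

definition lex_less :: "'a::linorder list \<Rightarrow> 'a list \<Rightarrow> bool" where
  "lex_less v w \<longleftrightarrow> (v, w) \<in> lexord {(a, b). a < b}"

definition is_lex_max :: "'a::linorder list set \<Rightarrow> 'a list \<Rightarrow> bool" where
  "is_lex_max C m \<longleftrightarrow> m \<in> C \<and> (\<forall>v\<in>C. v \<noteq> m \<longrightarrow> lex_less v m)"

definition T_arcs :: "'a::linorder list set \<Rightarrow> nat \<Rightarrow> 'a list set \<Rightarrow> 'a list \<Rightarrow> 'a list set" where
  "T_arcs F n C m = {x \<in> G_arcs F n C. butlast x \<noteq> m \<and>
      (\<forall>y \<in> G_arcs F n C. butlast y = butlast x \<longrightarrow> last y \<le> last x)}"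

definition T_rel :: "'a::linorder list set \<Rightarrow> nat \<Rightarrow> 'a list set \<Rightarrow> 'a list \<Rightarrow> ('a list \<times> 'a list) set" where
  "T_rel F n C m = {(butlast x, tl x) | x. x \<in> T_arcs F n C m}"

definition cur :: "'a list \<Rightarrow> 'a list list \<Rightarrow> 'a list" where
  "cur s ws = (if ws = [] then s else tl (last ws))"

inductive min_walk_prefix :: "'a::linorder list set \<Rightarrow> 'a list \<Rightarrow> 'a list list \<Rightarrow> bool"
  for Arcs s where
  Nil: "min_walk_prefix Arcs s []"
| step: "min_walk_prefix Arcs s ws \<Longrightarrow> x \<in> Arcs - set ws \<Longrightarrow> butlast x = cur s ws \<Longrightarrow>
     (\<forall>y \<in> Arcs - set ws. butlast y = butlast x \<longrightarrow> last x \<le> last y) \<Longrightarrow>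
     min_walk_prefix Arcs s (ws @ [x])"

definition minimal_walk :: "'a::linorder list set \<Rightarrow> 'a list \<Rightarrow> 'a list list \<Rightarrow> bool" where
  "minimal_walk Arcs s ws \<longleftrightarrow> min_walk_prefix Arcs s ws \<and>
     \<not> (\<exists>y \<in> Arcs - set ws. butlast y = cur s ws)"

definition eulerian_cycle :: "'a list set \<Rightarrow> 'a list list \<Rightarrow> bool" where
  "eulerian_cycle Arcs ws \<longleftrightarrow> distinct ws \<and> set ws = Arcs \<and>
     (\<forall>i. Suc i < length ws \<longrightarrow> tl (ws ! i) = butlast (ws ! Suc i)) \<and>
     (ws \<noteq> [] \<longrightarrow> tl (last ws) = butlast (hd ws))"

end

theory Submission
  imports Defs
begin

lemma pf_rotate1:
  assumes "w \<noteq> []"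
  shows "periodic_factor u (rotate1 w) \<longleftrightarrow> periodic_factor u w"
proof
  have L: "length w > 0" using assms by simp
  assume "periodic_factor u (rotate1 w)"
  then obtain i where i: "\<forall>j<length u. u!j = rotate1 w ! ((i+j) mod length w)"
    by (auto simp: periodic_factor_def)
  have "\<forall>j<length u. u!j = w ! ((Suc i + j) mod length w)"
  proof (intro allI impI)
    fix j assume "j < length u"
    then have "u!j = rotate1 w ! ((i+j) mod length w)" using i by auto
    also have "\<dots> = w ! (Suc ((i+j) mod length w) mod length w)"
      by (rule nth_rotate1[OF mod_less_divisor[OF L]])
    also have "\<dots> = w ! ((Suc i + j) mod length w)"
    proof -
      have "Suc ((i+j) mod length w) mod length w = (Suc i + j) mod length w"
        unfolding mod_Suc_eq add_Suc ..
      then show ?thesis by simp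
    qed
    finally show "u!j = w ! ((Suc i + j) mod length w)" .
  qed
  then show "periodic_factor u w" unfolding periodic_factor_def by blast
next
  have L: "length w > 0" using assms by simp
  assume "periodic_factor u w"
  then obtain i where i: "\<forall>j<length u. u!j = w ! ((i+j) mod length w)"
    by (auto simp: periodic_factor_def)
  have "\<forall>j<length u. u!j = rotate1 w ! ((i + length w - 1 + j) mod length w)"
  proof (intro allI impI)
    fix j assume j: "j < length u"
    have "rotate1 w ! ((i + length w - 1 + j) mod length w)
        = w ! (Suc ((i + length w - 1 + j) mod length w) mod length w)"
      by (rule nth_rotate1[OF mod_less_divisor[OF L]])
    also have "\<dots> = w ! ((i+j) mod length w)"
    proof -
      have a: "Suc ((i + length w - 1 + j) mod length w) mod length w
        = Suc (i + length w - 1 + j) mod length w" by (rule mod_Suc_eq)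
      have b: "Suc (i + length w - 1 + j) = (i+j) + length w" using L by simp
      have c: "((i+j) + length w) mod length w = (i+j) mod length w" by simp
      have "Suc ((i + length w - 1 + j) mod length w) mod length w = (i+j) mod length w"
        by (simp only: a b c)
      then show ?thesis by (rule arg_cong)
    qed
    finally have r: "rotate1 w ! ((i + length w - 1 + j) mod length w) = w ! ((i+j) mod length w)" .
    have ui: "u!j = w ! ((i+j) mod length w)" using i j by blast
    show "u!j = rotate1 w ! ((i + length w - 1 + j) mod length w)"
      by (rule trans[OF ui r[symmetric]])
  qed
  then have "\<forall>j<length u. u!j = rotate1 w ! ((i + length w - 1 + j) mod length (rotate1 w))"
    by (simp only: length_rotate1)
  then show "periodic_factor u (rotate1 w)" unfolding periodic_factor_def by blast
qed

lemma W_rotate1: "rotate1 x \<in> W F k \<longleftrightarrow> x \<in> W F k"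
  by (cases "x = []") (auto simp: W_def in_lang_def pf_rotate1)

lemma W_rotate: "rotate k x \<in> W F m \<longleftrightarrow> x \<in> W F m"
  by (induction k) (auto simp: W_rotate1)

lemma butlast_rotate1: "xs \<noteq> [] \<Longrightarrow> butlast (rotate1 xs) = tl xs"
  by (cases xs) auto

lemma W_len: "x \<in> W F k \<Longrightarrow> length x = k" by (simp add: W_def)

lemma W_path:
  assumes "x \<in> W F (Suc n)"
  shows "(tl x, tl (rotate k x)) \<in> (dB_rel F n)\<^sup>*"
proof (induction k)
  case 0 then show ?case by simp
next
  case (Suc k)
  let ?y = "rotate k x"
  have y: "?y \<in> W F (Suc n)" using assms W_rotate by blast
  have "length ?y = Suc n" using W_len[OF y] .
  then have "?y \<noteq> []" by (cases ?y) auto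
  then have "butlast (rotate1 ?y) = tl ?y" by (rule butlast_rotate1)
  moreover have "rotate1 ?y \<in> W F (Suc n)" using y W_rotate1 by blast
  ultimately have "(tl ?y, tl (rotate1 ?y)) \<in> dB_rel F n"
    unfolding dB_rel_def by (metis (mono_tags, lifting) mem_Collect_eq)
  have "(tl x, tl (rotate1 ?y)) \<in> (dB_rel F n)\<^sup>*"
    by (rule rtrancl_into_rtrancl[OF Suc.IH]) fact
  moreover have "rotate (Suc k) x = rotate1 ?y" by (rule rotate_Suc)
  ultimately show ?case by simp
qed

lemma W_back:
  assumes "x \<in> W F (Suc n)"
  shows "(tl x, butlast x) \<in> (dB_rel F n)\<^sup>*"
proof -
  have len: "length x = Suc n" using W_len[OF assms] .
  have ne: "rotate n x \<noteq> []" using len by (cases x) auto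
  have e: "rotate1 (rotate n x) = x" using len rotate_Suc[of n x] rotate_id[of "Suc n" x] by simp
  have "tl (rotate n x) = butlast x" using butlast_rotate1[OF ne] e by simp
  then show ?thesis using W_path[OF assms, of n] by simp
qed

lemma C_iff:
  assumes scc: "is_scc F n C" and x: "x \<in> W F (Suc n)"
  shows "butlast x \<in> C \<longleftrightarrow> tl x \<in> C"
proof -
  have len: "length x = Suc n" using W_len[OF x] .
  have e: "(butlast x, tl x) \<in> dB_rel F n" using x unfolding dB_rel_def by blast
  have b: "(tl x, butlast x) \<in> (dB_rel F n)\<^sup>*" using W_back[OF x] .
  have l1: "length (tl x) = n" and l2: "length (butlast x) = n" using len by auto
  show ?thesis
  proof
    assume "butlast x \<in> C"
    then show "tl x \<in> C" using scc l1 e b unfolding is_scc_def by blast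
  next
    assume "tl x \<in> C"
    then show "butlast x \<in> C" using scc l2 e b unfolding is_scc_def by blast
  qed
qed

lemma mwp_basic:
  "min_walk_prefix A s ws \<Longrightarrow> distinct ws \<and> set ws \<subseteq> A \<and>
    (\<forall>i. Suc i < length ws \<longrightarrow> tl (ws!i) = butlast (ws!Suc i)) \<and>
    (ws \<noteq> [] \<longrightarrow> butlast (hd ws) = s)"
proof (induction rule: min_walk_prefix.induct)
  case Nil then show ?case by simp
next
  case (step ws x)
  have c: "\<forall>i. Suc i < length (ws@[x]) \<longrightarrow> tl ((ws@[x])!i) = butlast ((ws@[x])!Suc i)"
  proof (intro allI impI)
    fix i assume i: "Suc i < length (ws@[x])"
    show "tl ((ws@[x])!i) = butlast ((ws@[x])!Suc i)"
    proof (cases "Suc i < length ws")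
      case True then show ?thesis using step by (simp add: nth_append)
    next
      case False
      then have "Suc i = length ws" using i by simp
      then have ne: "ws \<noteq> []" and "(ws@[x])!Suc i = x" by auto
      have "i = length ws - 1" using \<open>Suc i = length ws\<close> by simp
      then have "(ws@[x])!i = last ws" using ne by (simp add: nth_append last_conv_nth)
      then show ?thesis using step ne \<open>(ws@[x])!Suc i = x\<close> by (simp add: cur_def)
    qed
  qed
  show ?case
  proof (cases "ws = []")
    case True then show ?thesis using step c by (simp add: cur_def)
  next
    case False then show ?thesis using step c by (simp add: cur_def)
  qed
qed

lemma mwp_count:
  "min_walk_prefix A s ws \<Longrightarrow>
    length (filter (\<lambda>x. tl x = v) ws) + (if v = s then 1 else 0)
    = length (filter (\<lambda>x. butlast x = v) ws) + (if v = cur s ws then 1 else 0)"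
proof (induction rule: min_walk_prefix.induct)
  case Nil then show ?case by (simp add: cur_def)
next
  case (step ws x)
  have "cur s (ws@[x]) = tl x" by (simp add: cur_def)
  then show ?case using step by auto
qed

lemma mwp_nth:
  "min_walk_prefix A s ws \<Longrightarrow> j < length ws \<Longrightarrow>
    ws!j \<in> A - set (take j ws) \<and>
    (\<forall>y\<in>A - set (take j ws). butlast y = butlast (ws!j) \<longrightarrow> last (ws!j) \<le> last y)"
proof (induction arbitrary: j rule: min_walk_prefix.induct)
  case Nil then show ?case by simp
next
  case (step ws x)
  show ?case
  proof (cases "j < length ws")
    case True then show ?thesis using step by (simp add: nth_append)
  next
    case False
    then have "j = length ws" using step by simp
    then show ?thesis using step by simp
  qed
qed


theorem theorem2:
  fixes F :: "('a::{finite,linorder}) list set" and n :: nat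
    and C :: "'a list set" and m :: "'a list" and ws :: "'a list list"
  assumes "n \<ge> 1"
    and "is_max_scc F n C"
    and "is_lex_max C m"
    and "minimal_walk (G_arcs F n C) m ws"
  shows "eulerian_cycle (G_arcs F n C) ws \<longleftrightarrow> acyclic (T_rel F n C m)"
proof -
  let ?A = "G_arcs F n C"
  have scc: "is_scc F n C" using assms(2) by (simp add: is_max_scc_def)
  have mC: "m \<in> C" using assms(3) by (simp add: is_lex_max_def)
  have mw: "min_walk_prefix ?A m ws" and nstuck: "\<not> (\<exists>y \<in> ?A - set ws. butlast y = cur m ws)"
    using assms(4) by (auto simp: minimal_walk_def)
  have Alen: "length x = Suc n" if "x \<in> ?A" for x
    using that by (simp add: G_arcs_def W_def)
  have fin: "finite ?A"
  proof (rule finite_subset)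
    show "?A \<subseteq> {xs. set xs \<subseteq> UNIV \<and> length xs = Suc n}" using Alen by auto
    show "finite {xs. set xs \<subseteq> (UNIV::'a set) \<and> length xs = Suc n}"
      by (rule finite_lists_length_eq) simp
  qed
  have A_char: "x \<in> ?A \<longleftrightarrow> x \<in> W F (Suc n) \<and> butlast x \<in> C" for x
    using C_iff[OF scc] by (auto simp: G_arcs_def)
  have bal: "card {x\<in>?A. tl x = v} = card {x\<in>?A. butlast x = v}" for v
  proof -
    have img: "rotate1 ` {x\<in>?A. tl x = v} = {x\<in>?A. butlast x = v}"
    proof
      show "rotate1 ` {x\<in>?A. tl x = v} \<subseteq> {x\<in>?A. butlast x = v}"
      proof
        fix z assume "z \<in> rotate1 ` {x\<in>?A. tl x = v}"
        then obtain x where x: "x \<in> ?A" "tl x = v" "z = rotate1 x" by auto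
        have ne: "x \<noteq> []" using Alen[OF x(1)] by (cases x) auto
        have W: "x \<in> W F (Suc n)" "butlast x \<in> C" using x(1) A_char by auto
        have "tl x \<in> C" using W C_iff[OF scc] by blast
        then show "z \<in> {x\<in>?A. butlast x = v}"
          using x W ne W_rotate1 butlast_rotate1[OF ne] A_char by auto
      qed
    next
      show "{x\<in>?A. butlast x = v} \<subseteq> rotate1 ` {x\<in>?A. tl x = v}"
      proof
        fix y assume y: "y \<in> {x\<in>?A. butlast x = v}"
        have "length y = Suc n" using y Alen by blast
        then have ne: "y \<noteq> []" by (cases y) auto
        define x where "x = last y # butlast y"
        have r: "rotate1 x = y" using ne by (simp add: x_def)
        have tx: "tl x = v" using y by (simp add: x_def)
        have Wy: "y \<in> W F (Suc n)" "butlast y \<in> C" using y A_char by auto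
        have Wx: "x \<in> W F (Suc n)" using Wy(1) r W_rotate1 by metis
        have "butlast x \<in> C" using Wy(2) y tx C_iff[OF scc Wx] by auto
        then have "x \<in> {x\<in>?A. tl x = v}" using Wx tx A_char by auto
        then show "y \<in> rotate1 ` {x\<in>?A. tl x = v}" using r by force
      qed
    qed
    have "inj_on rotate1 {x\<in>?A. tl x = v}" using inj_rotate1 by (rule inj_on_subset) simp
    then have "card (rotate1 ` {x\<in>?A. tl x = v}) = card {x\<in>?A. tl x = v}" by (rule card_image)
    then show ?thesis using img by simp
  qed
  have uniq: "x = y" if "x \<in> ?A" "y \<in> ?A" "butlast x = butlast y" "last x = last y" for x y
  proof -
    have lx: "length x = Suc n" and ly: "length y = Suc n" using that Alen by blast+
    have "x \<noteq> []" using lx by (cases x) simp_all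
    moreover have "y \<noteq> []" using ly by (cases y) simp_all
    ultimately have "x = butlast x @ [last x]" "y = butlast y @ [last y]" by simp_all
    then show ?thesis using that by simp
  qed
  have basic: "distinct ws" "set ws \<subseteq> ?A"
    "\<forall>i. Suc i < length ws \<longrightarrow> tl (ws!i) = butlast (ws!Suc i)"
    "ws \<noteq> [] \<longrightarrow> butlast (hd ws) = m"
    using mwp_basic[OF mw] by auto
  have cnt: "card {x\<in>set ws. tl x = v} + (if v = m then 1 else 0)
      = card {x\<in>set ws. butlast x = v} + (if v = cur m ws then 1 else 0)" for v
  proof -
    have e1: "{x. tl x = v} \<inter> set ws = {x\<in>set ws. tl x = v}" by blast
    have e2: "{x. butlast x = v} \<inter> set ws = {x\<in>set ws. butlast x = v}" by blast
    have "length (filter (\<lambda>x. tl x = v) ws) = card {x\<in>set ws. tl x = v}"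
      by (simp only: distinct_length_filter[OF basic(1)] e1)
    moreover have "length (filter (\<lambda>x. butlast x = v) ws) = card {x\<in>set ws. butlast x = v}"
      by (simp only: distinct_length_filter[OF basic(1)] e2)
    ultimately show ?thesis using mwp_count[OF mw, of v] by simp
  qed
  have sub_tl: "{x\<in>set ws. tl x = v} \<subseteq> {x\<in>?A. tl x = v}" for v using basic(2) by auto
  have sub_bl: "{x\<in>set ws. butlast x = v} \<subseteq> {x\<in>?A. butlast x = v}" for v using basic(2) by auto
  have unused: "\<exists>y\<in>?A - set ws. butlast y = v"
    if "card {x\<in>set ws. butlast x = v} < card {x\<in>?A. butlast x = v}" for v
  proof (rule ccontr)
    assume "\<not> ?thesis"
    then have "{x\<in>?A. butlast x = v} \<subseteq> {x\<in>set ws. butlast x = v}" by auto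
    then have "card {x\<in>?A. butlast x = v} \<le> card {x\<in>set ws. butlast x = v}"
      by (rule card_mono[rotated]) simp
    with that show False by simp
  qed
  have endm: "cur m ws = m"
  proof (rule ccontr)
    assume ne: "cur m ws \<noteq> m"
    let ?v = "cur m ws"
    have "card {x\<in>set ws. tl x = ?v} = card {x\<in>set ws. butlast x = ?v} + 1"
      using cnt[of ?v] ne by simp
    moreover have "card {x\<in>set ws. tl x = ?v} \<le> card {x\<in>?A. tl x = ?v}"
      by (rule card_mono[OF _ sub_tl]) (simp add: fin)
    ultimately have "card {x\<in>set ws. butlast x = ?v} < card {x\<in>?A. butlast x = ?v}"
      using bal[of ?v] by simp
    then show False using unused nstuck by blast
  qed
  have lastexit: "y \<in> set (take j ws)"
    if j: "j < length ws" and mx: "\<forall>y\<in>?A. butlast y = butlast (ws!j) \<longrightarrow> last y \<le> last (ws!j)"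
      and y: "y \<in> ?A" "butlast y = butlast (ws!j)" "y \<noteq> ws!j" for j y
  proof (rule ccontr)
    assume "y \<notin> set (take j ws)"
    then have "last (ws!j) \<le> last y" using mwp_nth[OF mw j] y by auto
    moreover have "last y \<le> last (ws!j)" using mx y by auto
    moreover have "ws!j \<in> ?A" using mwp_nth[OF mw j] by auto
    ultimately have "y = ws!j" using uniq y order_antisym by blast
    with y show False by simp
  qed
  show ?thesis
  proof
    assume eu: "eulerian_cycle ?A ws"
    then have setA: "set ws = ?A" by (simp add: eulerian_cycle_def)
    define g where "g v = (if v = m then length ws else Max {i. i < length ws \<and> butlast (ws!i) = v})" for v
    have key: "\<exists>i<length ws. ws!i = x \<and> g (butlast x) = i" if x: "x \<in> T_arcs F n C m" for x
    proof -
      have xA: "x \<in> ?A" and xm: "butlast x \<noteq> m"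
        and mx: "\<forall>y \<in> ?A. butlast y = butlast x \<longrightarrow> last y \<le> last x"
        using x by (auto simp: T_arcs_def)
      obtain i where i: "i < length ws" "ws!i = x" using xA setA in_set_conv_nth[of x ws] by auto
      let ?I = "{i. i < length ws \<and> butlast (ws!i) = butlast x}"
      have "Max ?I = i"
      proof (rule Max_eqI)
        show "finite ?I" by simp
        show "i \<in> ?I" using i by simp
        fix k assume k: "k \<in> ?I"
        show "k \<le> i"
        proof (cases "ws!k = x")
          case True
          have kl: "k < length ws" using k by simp
          have "ws!k = ws!i" using True i by simp
          then have "k = i" using nth_eq_iff_index_eq[OF basic(1) kl i(1)] by blast
          then show ?thesis by simp
        next
          case False
          have kl: "k < length ws" and kb0: "butlast (ws!k) = butlast x" using k by simp_all
          have kb: "butlast (ws!k) = butlast (ws!i)" using kb0 i(2) by simp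
          have "ws!k \<in> set ws" by (rule nth_mem[OF kl])
          then have "ws!k \<in> ?A" using setA by simp
          moreover have "\<forall>y\<in>?A. butlast y = butlast (ws!i) \<longrightarrow> last y \<le> last (ws!i)"
            using mx i by simp
          moreover have "ws!k \<noteq> ws!i" using False i by simp
          ultimately have "ws!k \<in> set (take i ws)" using lastexit[OF i(1)] kb by blast
          then obtain k' where k': "k' < length (take i ws)" "take i ws ! k' = ws!k"
            using in_set_conv_nth[of "ws!k" "take i ws"] by blast
          then have "k' < i" "ws!k' = ws!k" by auto
          then have "k' = k" using nth_eq_iff_index_eq[OF basic(1), of k' k] kl i(1) by simp
          then show ?thesis using \<open>k' < i\<close> by simp
        qed
      qed
      then show ?thesis using i xm by (auto simp: g_def)
    qed
    have mono: "g v < g w" if vw: "(v, w) \<in> T_rel F n C m" for v w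
    proof -
      obtain x where x: "x \<in> T_arcs F n C m" "v = butlast x" "w = tl x"
        using vw by (auto simp: T_rel_def)
      obtain i where i: "i < length ws" "ws!i = x" "g v = i" using key[OF x(1)] x(2) by auto
      show ?thesis
      proof (cases "w = m")
        case True then show ?thesis using i by (simp add: g_def)
      next
        case False
        have si: "Suc i < length ws"
        proof (rule ccontr)
          assume "\<not> Suc i < length ws"
          then have "i = length ws - 1" "ws \<noteq> []" using i by auto
          then have "last ws = x" using i by (simp add: last_conv_nth)
          then have "w = m" using endm x(3) \<open>ws \<noteq> []\<close> by (simp add: cur_def)
          with False show False by simp
        qed
        have "butlast (ws!Suc i) = w" using basic(3) si i x by auto
        then have "Suc i \<in> {i. i < length ws \<and> butlast (ws!i) = w}" using si by simp
        then have "Suc i \<le> Max {i. i < length ws \<and> butlast (ws!i) = w}" by (intro Max_ge) simp_all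
        then show ?thesis using False i by (simp add: g_def)
      qed
    qed
    have "T_rel F n C m \<subseteq> inv_image less_than g" using mono by auto
    moreover have "acyclic (inv_image less_than g)" by (intro wf_acyclic wf_inv_image wf_less_than)
    ultimately show "acyclic (T_rel F n C m)" using acyclic_subset by blast
  next
    assume ac: "acyclic (T_rel F n C m)"
    have setA: "set ws = ?A"
    proof (rule ccontr)
      assume "set ws \<noteq> ?A"
      then have ne: "?A - set ws \<noteq> {}" using basic(2) by auto
      define U where "U = butlast ` (?A - set ws)"
      have Une: "U \<noteq> {}" and Ufin: "finite U" using ne fin by (auto simp: U_def)
      have succ: "\<exists>w\<in>U. (v, w) \<in> T_rel F n C m" if v: "v \<in> U" for v
      proof -
        obtain y0 where y0: "y0 \<in> ?A" "y0 \<notin> set ws" "butlast y0 = v" using v by (auto simp: U_def)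
        have vm: "v \<noteq> m" using y0 nstuck endm by auto
        let ?E = "{y\<in>?A. butlast y = v}"
        have Efin: "finite ?E" using fin by simp
        have Ene: "?E \<noteq> {}" using y0 by auto
        let ?M = "Max (last ` ?E)"
        have "?M \<in> last ` ?E" using Efin Ene by (intro Max_in) auto
        then obtain x where xE: "x \<in> ?E" "last x = ?M" by auto
        have xmax: "\<forall>y\<in>?A. butlast y = butlast x \<longrightarrow> last y \<le> last x"
          using xE Efin by auto
        have xT: "x \<in> T_arcs F n C m" using xE xmax vm by (auto simp: T_arcs_def)
        have vw: "(v, tl x) \<in> T_rel F n C m" using xT xE unfolding T_rel_def by auto
        have xnot: "x \<notin> set ws"
        proof
          assume "x \<in> set ws"
          then obtain j where j: "j < length ws" "ws!j = x" by (metis in_set_conv_nth)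
          show False
          proof (cases "y0 = x")
            case True with y0 \<open>x \<in> set ws\<close> show False by simp
          next
            case False
            then have "y0 \<in> set (take j ws)" using lastexit[of j y0] j xmax y0 xE by auto
            then show False using y0 set_take_subset by fast
          qed
        qed
        let ?w = "tl x"
        have "{z\<in>set ws. tl z = ?w} \<subset> {z\<in>?A. tl z = ?w}" using sub_tl xnot xE by auto
        then have lt: "card {z\<in>set ws. tl z = ?w} < card {z\<in>?A. tl z = ?w}"
          using fin by (intro psubset_card_mono) simp_all
        have "card {z\<in>set ws. tl z = ?w} = card {z\<in>set ws. butlast z = ?w}"
          using cnt[of ?w] endm by simp
        then have "card {z\<in>set ws. butlast z = ?w} < card {z\<in>?A. butlast z = ?w}"
          using lt bal[of ?w] by simp
        then obtain y where "y \<in> ?A - set ws" "butlast y = ?w" using unused by blast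
        then have "?w \<in> U" unfolding U_def by (metis image_eqI)
        with vw show ?thesis by blast
      qed
      let ?R = "T_rel F n C m \<inter> (U \<times> U)"
      have "acyclic ?R" using ac by (rule acyclic_subset) auto
      moreover have "finite ?R" using Ufin by (intro finite_Int) (simp add: finite_cartesian_product)
      ultimately have wf: "wf (?R\<inverse>)" by (intro finite_acyclic_wf_converse)
      obtain u where "u \<in> U" using Une by auto
      then obtain z where z: "z \<in> U" "\<And>y. (y, z) \<in> ?R\<inverse> \<Longrightarrow> y \<notin> U"
        using wfE_min[OF wf] by blast
      obtain w where w: "w \<in> U" "(z, w) \<in> T_rel F n C m" using succ[OF z(1)] by blast
      then have "(w, z) \<in> ?R\<inverse>" using z(1) by simp
      then have "w \<notin> U" by (rule z(2))
      with w(1) show False by simp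
    qed
    show "eulerian_cycle ?A ws"
      unfolding eulerian_cycle_def
    proof (intro conjI impI)
      show "distinct ws" by (rule basic(1))
      show "set ws = ?A" by (rule setA)
      show "\<forall>i. Suc i < length ws \<longrightarrow> tl (ws!i) = butlast (ws!Suc i)" by (rule basic(3))
      assume "ws \<noteq> []"
      then show "tl (last ws) = butlast (hd ws)" using endm basic(4) by (simp add: cur_def)
    qed
  qed
qed

end
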